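(* Let $X_1,\ldots,X_N$ be independent random vectors in $\mathbb R^n$ and let $\psi>0$ be such that $\sup_{i\le N}\sup_{y\in S^{n-1}}\|\langle X_i,y\rangle\|_{\psi_1}\le\psi$. Let $1\le k,m\le N$, $\varepsilon,\alpha\in(0,1]$, $\beta>0$ and $L>0$. Let $B(m,\beta)$ be the set of vectors $x\in\beta B_2^N$ with $|\mathrm{supp}\,x|\le m$, and let $\mathcal B\subset B(m,\beta)$ be a (deterministic) set of cardinality $M$. Then $$\mathbb P\Big(\sup_{F\subset\{1,\ldots,N\},\,|F|\le k}\ \sup_{x\in\mathcal B}\ \sup_{z\in\mathcal N(F,\varepsilon,\alpha)}\ \sum_{i\in F}\Big|\Big\langle z_iX_i,\sum_{j\notin F}x_jX_j\Big\rangle\Big|>\psi\,\alpha\beta LA_m\Big)\le M\Big(\frac{6eN}{k\varepsilon}\Big)^k e^{-L}.$$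
   Context: For a random variable $Y$, $\|Y\|_{\psi_1}=\inf\{C>0:\mathbb E\exp(|Y|/C)\le 2\}$. $A$ denotes the random $n\times N$ matrix whose columns are $X_1,\ldots,X_N$, and for $1\le m\le N$, $A_m=\sup\{|Az|: z\in S^{N-1},\ |\mathrm{supp}\,z|\le m\}$ (Euclidean norms). For $E\subset\{1,\ldots,N\}$, $\mathbb R^E$ is the set of vectors in $\mathbb R^N$ supported in $E$. For $\varepsilon,\alpha\in(0,1]$, $\mathcal N(E,\varepsilon,\alpha)$ denotes a fixed $\varepsilon$-net (in the Euclidean metric) of $B_2^N\cap\alpha B_\infty^N\cap\mathbb R^E$ of cardinality at most $(3/\varepsilon)^{|E|}$; $z_i$, $x_j$ denote coordinates. *)

theory Defs
  imports "HOL-Probability.Probability"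
begin

text \<open>psi_1 (Orlicz) norm of a real random variable, as an extended real
  (infimum of the empty set is +infinity).\<close>
definition psi1_norm :: "'a measure \<Rightarrow> ('a \<Rightarrow> real) \<Rightarrow> ereal" where
  "psi1_norm M Y = Inf {ereal C | C. C > 0 \<and>
      (\<integral>\<^sup>+ \<omega>. ennreal (exp (\<bar>Y \<omega>\<bar> / C)) \<partial>M) \<le> 2}"

text \<open>Support of a vector in R^N (index type 'N, N = CARD('N)).\<close>
definition supp_vec :: "real ^ 'N \<Rightarrow> 'N set" where
  "supp_vec z = {i. z $ i \<noteq> 0}"

definition A_sparse :: "('N::finite \<Rightarrow> 'a \<Rightarrow> real ^ 'n) \<Rightarrow> nat \<Rightarrow> 'a \<Rightarrow> real" where
  "A_sparse X m \<omega> = Sup {norm (\<Sum>j\<in>UNIV. (z $ j) *\<^sub>R X j \<omega>) | z :: real ^ 'N.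
       norm z = 1 \<and> card (supp_vec z) \<le> m}"

definition net_domain :: "'N set \<Rightarrow> real \<Rightarrow> (real ^ 'N) set" where
  "net_domain E \<alpha> = {z. norm z \<le> 1 \<and> (\<forall>i. \<bar>z $ i\<bar> \<le> \<alpha>) \<and> supp_vec z \<subseteq> E}"

definition is_net_family :: "('N::finite set \<Rightarrow> (real ^ 'N) set) \<Rightarrow> real \<Rightarrow> real \<Rightarrow> bool" where
  "is_net_family Net \<epsilon> \<alpha> \<longleftrightarrow> (\<forall>E. Net E \<subseteq> net_domain E \<alpha> \<and>
      (\<forall>y\<in>net_domain E \<alpha>. \<exists>z\<in>Net E. dist y z \<le> \<epsilon>) \<and>
      finite (Net E) \<and> real (card (Net E)) \<le> (3 / \<epsilon>) ^ card E)"

definition B_sparse :: "nat \<Rightarrow> real \<Rightarrow> (real ^ 'N::finite) set" where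
  "B_sparse m \<beta> = {x. norm x \<le> \<beta> \<and> card (supp_vec x) \<le> m}"

end

theory Submission
  imports Defs
begin


lemma psi1_bound:
  fixes Y :: "'a \<Rightarrow> real"
  assumes P: "prob_space M" and Ym: "Y \<in> borel_measurable M"
    and n: "psi1_norm M Y \<le> ereal \<psi>" and "\<psi> > 0"
  shows "(\<integral>\<^sup>+ \<omega>. ennreal (exp (\<bar>Y \<omega>\<bar> / \<psi>)) \<partial>M) \<le> 2"
proof -
  define C where "C n = \<psi> + 1 / real (Suc n)" for n
  have Cpos: "C n > \<psi>" for n unfolding C_def by simp
  have bnd: "(\<integral>\<^sup>+ \<omega>. ennreal (exp (\<bar>Y \<omega>\<bar> / C n)) \<partial>M) \<le> 2" for n
  proof -
    have "Inf {ereal C | C. C > 0 \<and> (\<integral>\<^sup>+ \<omega>. ennreal (exp (\<bar>Y \<omega>\<bar> / C)) \<partial>M) \<le> 2} < ereal (C n)"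
    proof -
      have "ereal \<psi> < ereal (C n)" using Cpos[of n] by simp
      with n show ?thesis unfolding psi1_norm_def by (rule le_less_trans)
    qed
    then obtain D where D: "D > 0" "(\<integral>\<^sup>+ \<omega>. ennreal (exp (\<bar>Y \<omega>\<bar> / D)) \<partial>M) \<le> 2" "D < C n"
      unfolding Inf_less_iff by auto
    have "(\<integral>\<^sup>+ \<omega>. ennreal (exp (\<bar>Y \<omega>\<bar> / C n)) \<partial>M) \<le> (\<integral>\<^sup>+ \<omega>. ennreal (exp (\<bar>Y \<omega>\<bar> / D)) \<partial>M)"
      by (intro nn_integral_mono ennreal_leI) (use D in \<open>auto intro!: divide_left_mono mult_pos_pos\<close>)
    with D show ?thesis by order
  qed
  have lim: "(\<lambda>n. ennreal (exp (\<bar>Y \<omega>\<bar> / C n))) \<longlonglongrightarrow> ennreal (exp (\<bar>Y \<omega>\<bar> / \<psi>))" for \<omega>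
  proof -
    have "C \<longlonglongrightarrow> \<psi>" unfolding C_def
      using LIMSEQ_inverse_real_of_nat_add[of \<psi>] by (simp add: divide_inverse)
    then show ?thesis using \<open>\<psi>>0\<close> by (intro tendsto_ennrealI tendsto_intros) auto
  qed
  have "(\<integral>\<^sup>+ \<omega>. ennreal (exp (\<bar>Y \<omega>\<bar> / \<psi>)) \<partial>M) = (\<integral>\<^sup>+ \<omega>. liminf (\<lambda>n. ennreal (exp (\<bar>Y \<omega>\<bar> / C n))) \<partial>M)"
    by (intro nn_integral_cong) (metis lim lim_imp_Liminf trivial_limit_sequentially)
  also have "\<dots> \<le> liminf (\<lambda>n. \<integral>\<^sup>+ \<omega>. ennreal (exp (\<bar>Y \<omega>\<bar> / C n)) \<partial>M)"
    by (intro nn_integral_liminf) (use Ym in measurable)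
  also have "\<dots> \<le> 2"
    by (intro Liminf_le always_eventually allI bnd) simp
  finally show ?thesis .
qed



lemma ennreal_prod_le_pow:
  fixes f :: "'i \<Rightarrow> ennreal"
  assumes "finite F" "\<And>i. i \<in> F \<Longrightarrow> f i \<le> c"
  shows "prod f F \<le> c ^ card F"
  using assms
proof (induction F rule: finite_induct)
  case (insert a F)
  then show ?case by (simp add: mult_mono)
qed simp

definition Yf :: "'N set \<Rightarrow> real ^ 'N \<Rightarrow> ('N \<Rightarrow> real ^ 'n) \<Rightarrow> real ^ 'n" where
  "Yf F x g = (\<Sum>j\<in>UNIV - F. (x $ j) *\<^sub>R g j)"

definition Sf :: "'N set \<Rightarrow> real ^ 'N \<Rightarrow> real ^ 'N \<Rightarrow> ('N \<Rightarrow> real ^ 'n) \<Rightarrow> real" where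
  "Sf F x z g = (\<Sum>i\<in>F. \<bar>z $ i\<bar> * \<bar>g i \<bullet> Yf F x g\<bar>)"

definition hf :: "real \<Rightarrow> 'N set \<Rightarrow> real ^ 'N \<Rightarrow> real ^ 'N \<Rightarrow> ('N \<Rightarrow> real ^ 'n) \<Rightarrow> real" where
  "hf c F x z g = exp (Sf F x z g / (c * norm (Yf F x g)))"

lemma hf_meas:
  fixes F :: "'N::finite set"
  shows "(\<lambda>g. ennreal (hf c F x z g :: real)) \<in> borel_measurable (Pi\<^sub>M UNIV (\<lambda>_. borel :: (real^'n::finite) measure))"
  unfolding hf_def Sf_def Yf_def by measurable



lemma hf_merge:
  fixes F :: "'N::finite set" and a b :: "'N \<Rightarrow> real^'n::finite"
  assumes c: "c > 0"
  shows "hf c F x z (merge (UNIV - F) F (b, a)) =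
    (\<Prod>i\<in>F. exp (\<bar>z $ i\<bar> * \<bar>a i \<bullet> Yf F x b\<bar> / (c * norm (Yf F x b))))"
proof -
  have Y: "Yf F x (merge (UNIV - F) F (b, a)) = Yf F x b"
    unfolding Yf_def by (intro sum.cong) (auto simp: merge_def)
  have S: "Sf F x z (merge (UNIV - F) F (b, a)) = (\<Sum>i\<in>F. \<bar>z $ i\<bar> * \<bar>a i \<bullet> Yf F x b\<bar>)"
    unfolding Sf_def Y by (intro sum.cong) (auto simp: merge_def)
  show ?thesis unfolding hf_def Y S
    by (simp add: sum_divide_distrib exp_sum)
qed

lemma factor_bound:
  fixes M :: "'a measure" and X :: "'N::finite \<Rightarrow> 'a \<Rightarrow> real ^ 'n::finite"
  assumes P: "prob_space M" and Xm: "\<And>i. X i \<in> borel_measurable M"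
    and "\<psi> > 0"
    and psi: "\<And>i y. norm y = 1 \<Longrightarrow> psi1_norm M (\<lambda>\<omega>. X i \<omega> \<bullet> y) \<le> ereal \<psi>"
    and "0 < \<alpha>" and za: "\<bar>t\<bar> \<le> \<alpha>"
  shows "(\<integral>\<^sup>+ \<omega>. ennreal (exp (\<bar>t\<bar> * \<bar>X i \<omega> \<bullet> Y\<bar> / (\<psi> * \<alpha> * norm Y))) \<partial>M) \<le> 2"
proof (cases "Y = 0")
  case True
  interpret prob_space M by fact
  show ?thesis using True by (simp add: emeasure_space_1)
next
  case False
  define u where "u = (1 / norm Y) *\<^sub>R Y"
  have nu: "norm u = 1" using False unfolding u_def by simp
  have eq: "\<bar>X i \<omega> \<bullet> Y\<bar> / norm Y = \<bar>X i \<omega> \<bullet> u\<bar>" for \<omega>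
    using False unfolding u_def by (simp add: abs_mult)
  have "(\<integral>\<^sup>+ \<omega>. ennreal (exp (\<bar>t\<bar> * \<bar>X i \<omega> \<bullet> Y\<bar> / (\<psi> * \<alpha> * norm Y))) \<partial>M)
     \<le> (\<integral>\<^sup>+ \<omega>. ennreal (exp (\<bar>X i \<omega> \<bullet> u\<bar> / \<psi>)) \<partial>M)"
  proof (intro nn_integral_mono ennreal_leI)
    fix \<omega>
    have "\<bar>t\<bar> * \<bar>X i \<omega> \<bullet> Y\<bar> / (\<psi> * \<alpha> * norm Y) = (\<bar>t\<bar> / \<alpha>) * (\<bar>X i \<omega> \<bullet> Y\<bar> / norm Y / \<psi>)"
      by (simp add: field_simps)
    also have "\<dots> = (\<bar>t\<bar> / \<alpha>) * (\<bar>X i \<omega> \<bullet> u\<bar> / \<psi>)" by (simp add: eq)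
    also have "\<dots> \<le> 1 * (\<bar>X i \<omega> \<bullet> u\<bar> / \<psi>)"
      using za \<open>0 < \<alpha>\<close> \<open>\<psi> > 0\<close> by (intro mult_right_mono) auto
    finally show "exp (\<bar>t\<bar> * \<bar>X i \<omega> \<bullet> Y\<bar> / (\<psi> * \<alpha> * norm Y)) \<le> exp (\<bar>X i \<omega> \<bullet> u\<bar> / \<psi>)"
      by simp
  qed
  also have "\<dots> \<le> 2"
    by (rule psi1_bound[OF P _ psi[OF nu] \<open>\<psi> > 0\<close>]) (use Xm in measurable)
  finally show ?thesis .
qed



lemma core_bound:
  fixes M :: "'a measure" and X :: "'N::finite \<Rightarrow> 'a \<Rightarrow> real ^ 'n::finite"
  assumes P: "prob_space M" and Xm: "\<And>i. X i \<in> borel_measurable M"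
    and ind: "prob_space.indep_vars M (\<lambda>_. borel) X UNIV"
    and "\<psi> > 0"
    and psi: "\<And>i y. norm y = 1 \<Longrightarrow> psi1_norm M (\<lambda>\<omega>. X i \<omega> \<bullet> y) \<le> ereal \<psi>"
    and "0 < \<alpha>" and za: "\<And>i. \<bar>z $ i\<bar> \<le> \<alpha>"
  shows "(\<integral>\<^sup>+ \<omega>. ennreal (hf (\<psi> * \<alpha>) F x z (\<lambda>i. X i \<omega>)) \<partial>M) \<le> 2 ^ card F"
proof -
  interpret prob_space M by fact
  define D where "D i = distr M borel (X i)" for i
  have pD: "prob_space (D i)" for i unfolding D_def by (intro prob_space_distr Xm)
  interpret PP: product_prob_space D
    by (rule product_prob_spaceI) (rule pD)
  have sD: "sets (D i) = sets borel" for i unfolding D_def by simp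
  have dist: "distr M (\<Pi>\<^sub>M i\<in>UNIV. borel) (\<lambda>\<omega>. \<lambda>i\<in>UNIV. X i \<omega>) = (\<Pi>\<^sub>M i\<in>UNIV. D i)"
    unfolding D_def using indep_vars_iff_distr_eq_PiM[of UNIV X "\<lambda>_. borel"] ind Xm by simp
  have hm: "(\<lambda>g. ennreal (hf (\<psi> * \<alpha>) F x z g)) \<in> borel_measurable (\<Pi>\<^sub>M i\<in>UNIV. (borel :: (real^'n) measure))"
    by (rule hf_meas)
  have hm2: "(\<lambda>g. ennreal (hf (\<psi> * \<alpha>) F x z g)) \<in> borel_measurable (\<Pi>\<^sub>M i\<in>(UNIV - F) \<union> F. D i)"
    using hm by (simp cong: measurable_cong_sets add: sets_PiM_cong[OF _ sD])
  have "(\<integral>\<^sup>+ \<omega>. ennreal (hf (\<psi> * \<alpha>) F x z (\<lambda>i. X i \<omega>)) \<partial>M)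
      = (\<integral>\<^sup>+ \<omega>. ennreal (hf (\<psi> * \<alpha>) F x z (\<lambda>i\<in>UNIV. X i \<omega>)) \<partial>M)"
    by (simp add: restrict_def)
  also have "\<dots> = (\<integral>\<^sup>+ g. ennreal (hf (\<psi> * \<alpha>) F x z g) \<partial>distr M (\<Pi>\<^sub>M i\<in>UNIV. borel) (\<lambda>\<omega>. \<lambda>i\<in>UNIV. X i \<omega>))"
    by (rule nn_integral_distr[symmetric]) (use Xm hm in measurable)
  also have "\<dots> = (\<integral>\<^sup>+ g. ennreal (hf (\<psi> * \<alpha>) F x z g) \<partial>(\<Pi>\<^sub>M i\<in>(UNIV - F) \<union> F. D i))"
    unfolding dist by simp
  also have "\<dots> = (\<integral>\<^sup>+ b. (\<integral>\<^sup>+ a. ennreal (hf (\<psi> * \<alpha>) F x z (merge (UNIV - F) F (b, a))) \<partial>(\<Pi>\<^sub>M i\<in>F. D i)) \<partial>(\<Pi>\<^sub>M i\<in>UNIV - F. D i))"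
    by (rule PP.product_nn_integral_fold) (use hm2 in auto)
  also have "\<dots> \<le> (\<integral>\<^sup>+ b. 2 ^ card F \<partial>(\<Pi>\<^sub>M i\<in>UNIV - F. D i))"
  proof (intro nn_integral_mono)
    fix b :: "'N \<Rightarrow> real^'n"
    let ?Y = "Yf F x b"
    have "(\<integral>\<^sup>+ a. ennreal (hf (\<psi> * \<alpha>) F x z (merge (UNIV - F) F (b, a))) \<partial>(\<Pi>\<^sub>M i\<in>F. D i))
        = (\<integral>\<^sup>+ a. (\<Prod>i\<in>F. ennreal (exp (\<bar>z $ i\<bar> * \<bar>a i \<bullet> ?Y\<bar> / (\<psi> * \<alpha> * norm ?Y)))) \<partial>(\<Pi>\<^sub>M i\<in>F. D i))"
      using \<open>\<psi> > 0\<close> \<open>0 < \<alpha>\<close> by (simp add: hf_merge prod_ennreal)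
    also have "\<dots> = (\<Prod>i\<in>F. (\<integral>\<^sup>+ v. ennreal (exp (\<bar>z $ i\<bar> * \<bar>v \<bullet> ?Y\<bar> / (\<psi> * \<alpha> * norm ?Y))) \<partial>D i))"
      by (rule PP.product_nn_integral_prod) (auto simp: D_def)
    also have "\<dots> = (\<Prod>i\<in>F. (\<integral>\<^sup>+ \<omega>. ennreal (exp (\<bar>z $ i\<bar> * \<bar>X i \<omega> \<bullet> ?Y\<bar> / (\<psi> * \<alpha> * norm ?Y))) \<partial>M))"
      unfolding D_def by (intro prod.cong refl nn_integral_distr) (use Xm in auto)
    also have "\<dots> \<le> 2 ^ card F"
      by (intro ennreal_prod_le_pow factor_bound[OF P Xm \<open>\<psi> > 0\<close> psi \<open>0 < \<alpha>\<close> za]) auto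
    finally show "(\<integral>\<^sup>+ a. ennreal (hf (\<psi> * \<alpha>) F x z (merge (UNIV - F) F (b, a))) \<partial>(\<Pi>\<^sub>M i\<in>F. D i)) \<le> 2 ^ card F" .
  qed
  also have "\<dots> = 2 ^ card F"
  proof -
    interpret PF: prob_space "\<Pi>\<^sub>M i\<in>UNIV - F. D i"
      by (rule prob_space_PiM) (rule pD)
    show ?thesis by (simp add: PF.emeasure_space_1)
  qed
  finally show ?thesis .
qed



lemma A_bdd:
  fixes X :: "'N::finite \<Rightarrow> 'a \<Rightarrow> real ^ 'n::finite"
  shows "bdd_above {norm (\<Sum>j\<in>UNIV. (z $ j) *\<^sub>R X j \<omega>) | z :: real ^ 'N.
       norm z = 1 \<and> card (supp_vec z) \<le> m}"
proof (rule bdd_aboveI, safe)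
  fix z :: "real^'N" assume "norm z = 1"
  have "norm (\<Sum>j\<in>UNIV. (z $ j) *\<^sub>R X j \<omega>) \<le> (\<Sum>j\<in>UNIV. norm ((z $ j) *\<^sub>R X j \<omega>))"
    by (rule norm_sum)
  also have "\<dots> \<le> (\<Sum>j\<in>UNIV. norm (X j \<omega>))"
  proof (intro sum_mono)
    fix j
    have "\<bar>z $ j\<bar> \<le> 1" using component_le_norm_cart[of z j] \<open>norm z = 1\<close> by simp
    then show "norm ((z $ j) *\<^sub>R X j \<omega>) \<le> norm (X j \<omega>)"
      by (simp add: mult_left_le_one_le)
  qed
  finally show "norm (\<Sum>j\<in>UNIV. (z $ j) *\<^sub>R X j \<omega>) \<le> (\<Sum>j\<in>UNIV. norm (X j \<omega>))" .
qed

lemma A_le: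
  fixes X :: "'N::finite \<Rightarrow> 'a \<Rightarrow> real ^ 'n::finite"
  assumes "norm z = 1" "card (supp_vec z) \<le> m"
  shows "norm (\<Sum>j\<in>UNIV. (z $ j) *\<^sub>R X j \<omega>) \<le> A_sparse X m \<omega>"
  unfolding A_sparse_def by (rule cSup_upper[OF _ A_bdd]) (use assms in blast)

lemma A_nonneg:
  fixes X :: "'N::finite \<Rightarrow> 'a \<Rightarrow> real ^ 'n::finite"
  assumes "1 \<le> m"
  shows "0 \<le> A_sparse X m \<omega>"
proof -
  obtain i0 :: 'N where True by simp
  have "supp_vec (axis i0 (1::real)) = {i0}" unfolding supp_vec_def by (auto simp: axis_def)
  then have "norm (\<Sum>j\<in>UNIV. (axis i0 (1::real) $ j) *\<^sub>R X j \<omega>) \<le> A_sparse X m \<omega>"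
    using assms by (intro A_le) auto
  then show ?thesis by (meson norm_ge_zero order_trans)
qed

lemma A_gen:
  fixes X :: "'N::finite \<Rightarrow> 'a \<Rightarrow> real ^ 'n::finite"
  assumes "1 \<le> m" "card (supp_vec w) \<le> m"
  shows "norm (\<Sum>j\<in>UNIV. (w $ j) *\<^sub>R X j \<omega>) \<le> norm w * A_sparse X m \<omega>"
proof (cases "w = 0")
  case True then show ?thesis by simp
next
  case False
  define z where "z = (1 / norm w) *\<^sub>R w"
  have nz: "norm z = 1" using False by (simp add: z_def)
  have sz: "supp_vec z = supp_vec w" using False by (auto simp: z_def supp_vec_def)
  have "(\<Sum>j\<in>UNIV. (z $ j) *\<^sub>R X j \<omega>) = (1 / norm w) *\<^sub>R (\<Sum>j\<in>UNIV. (w $ j) *\<^sub>R X j \<omega>)"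
    by (simp add: z_def scaleR_sum_right)
  then have "norm (\<Sum>j\<in>UNIV. (w $ j) *\<^sub>R X j \<omega>) / norm w \<le> A_sparse X m \<omega>"
    using A_le[OF nz, of m X \<omega>] sz assms by (simp add: divide_inverse mult.commute)
  then show ?thesis using False by (simp add: divide_le_eq mult.commute)
qed

lemma Y_le:
  fixes X :: "'N::finite \<Rightarrow> 'a \<Rightarrow> real ^ 'n::finite"
  assumes "1 \<le> m" "x \<in> B_sparse m \<beta>"
  shows "norm (Yf F x (\<lambda>i. X i \<omega>)) \<le> \<beta> * A_sparse X m \<omega>"
proof -
  define w where "w = (\<chi> j. if j \<in> F then 0 else x $ j)"
  have "Yf F x (\<lambda>i. X i \<omega>) = (\<Sum>j\<in>UNIV. (w $ j) *\<^sub>R X j \<omega>)"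
    unfolding Yf_def w_def by (rule sum.mono_neutral_cong_left) auto
  moreover have "card (supp_vec w) \<le> m"
  proof -
    have "supp_vec w \<subseteq> supp_vec x" by (auto simp: supp_vec_def w_def)
    then have "card (supp_vec w) \<le> card (supp_vec x)" by (intro card_mono) auto
    also have "\<dots> \<le> m" using assms(2) unfolding B_sparse_def by simp
    finally show ?thesis .
  qed
  moreover have "norm w \<le> \<beta>"
  proof -
    have "norm w \<le> norm x" by (rule norm_le_componentwise_cart) (auto simp: w_def)
    then show ?thesis using assms(2) unfolding B_sparse_def by simp
  qed
  ultimately show ?thesis
  proof -
    assume Y: "Yf F x (\<lambda>i. X i \<omega>) = (\<Sum>j\<in>UNIV. (w $ j) *\<^sub>R X j \<omega>)"
      and c: "card (supp_vec w) \<le> m" and nw: "norm w \<le> \<beta>"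
    have "norm (Yf F x (\<lambda>i. X i \<omega>)) \<le> norm w * A_sparse X m \<omega>"
      unfolding Y by (rule A_gen[OF assms(1) c])
    also have "\<dots> \<le> \<beta> * A_sparse X m \<omega>"
      by (rule mult_right_mono[OF nw A_nonneg[OF assms(1)]])
    finally show ?thesis .
  qed
qed



lemma sum_choose_bound:
  fixes k N :: nat
  assumes "1 \<le> k" "k \<le> N"
  shows "(\<Sum>j\<le>k. real (N choose j)) \<le> (exp 1 * real N / real k) ^ k"
proof -
  define t where "t = real k / real N"
  have t0: "0 < t" and t1: "t \<le> 1" using assms by (auto simp: t_def)
  have "t ^ k * (\<Sum>j\<le>k. real (N choose j)) = (\<Sum>j\<le>k. real (N choose j) * t ^ k)"
    by (simp add: sum_distrib_left mult.commute)
  also have "\<dots> \<le> (\<Sum>j\<le>k. real (N choose j) * t ^ j)"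
    by (intro sum_mono mult_left_mono power_decreasing) (use t0 t1 in auto)
  also have "\<dots> \<le> (\<Sum>j\<le>N. real (N choose j) * t ^ j)"
    by (intro sum_mono2) (use assms t0 in auto)
  also have "\<dots> = (t + 1) ^ N"
    by (simp add: binomial_ring)
  also have "\<dots> \<le> exp t ^ N"
    by (intro power_mono) (use t0 in \<open>auto simp: add.commute exp_ge_add_one_self\<close>)
  also have "\<dots> = exp (real k)"
    using assms by (simp add: t_def flip: exp_of_nat_mult)
  also have "\<dots> = exp 1 ^ k" by (simp flip: exp_of_nat_mult)
  finally have "t ^ k * (\<Sum>j\<le>k. real (N choose j)) \<le> exp 1 ^ k" .
  then have "(\<Sum>j\<le>k. real (N choose j)) \<le> exp 1 ^ k / t ^ k"
    using t0 by (simp add: field_simps)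
  also have "\<dots> = (exp 1 * real N / real k) ^ k"
    using assms by (simp add: t_def power_divide field_simps)
  finally show ?thesis .
qed

lemma card_small_sets:
  "card {F :: 'N::finite set. card F \<le> k} = (\<Sum>j\<le>k. CARD('N) choose j)"
proof -
  have eq: "{F :: 'N set. card F \<le> k} = (\<Union>j\<in>{..k}. {F. F \<subseteq> UNIV \<and> card F = j})" by auto
  show ?thesis unfolding eq
    by (subst card_UN_disjoint) (auto intro!: sum.cong simp: n_subsets[of "UNIV::'N set", simplified])
qed



lemma hf_comp_meas:
  fixes X :: "'N::finite \<Rightarrow> 'a \<Rightarrow> real ^ 'n::finite"
  assumes Xm: "\<And>i. X i \<in> borel_measurable M"
  shows "(\<lambda>\<omega>. ennreal (hf c F x z (\<lambda>i. X i \<omega>))) \<in> borel_measurable M"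
proof -
  have "(\<lambda>\<omega>. \<lambda>i\<in>UNIV. X i \<omega>) \<in> measurable M (\<Pi>\<^sub>M i\<in>UNIV. (borel :: (real^'n) measure))"
    by (rule measurable_restrict) (rule Xm)
  from measurable_comp[OF this hf_meas[of c F x z]] show ?thesis
    by (simp add: restrict_def o_def)
qed

lemma real_part:
  fixes Fk :: "'N::finite set set" and B :: "(real^'N) set" and Net :: "'N set \<Rightarrow> (real^'N) set"
  assumes Fk: "Fk = {F. card F \<le> k}" and cN: "\<And>F. real (card (Net F)) \<le> (3 / \<epsilon>) ^ card F"
    and "0 < \<epsilon>" "\<epsilon> \<le> 1"
    and cF: "real (card Fk) \<le> (exp 1 * real CARD('N) / real k) ^ k"
  shows "(\<Sum>F\<in>Fk. \<Sum>x\<in>B. \<Sum>z\<in>Net F. exp (- L) * 2 ^ card F)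
     \<le> real (card B) * (6 * exp 1 * real CARD('N) / (real k * \<epsilon>)) ^ k * exp (- L)"
proof -
  have "(\<Sum>F\<in>Fk. \<Sum>x\<in>B. \<Sum>z\<in>Net F. exp (- L) * 2 ^ card F)
      = (\<Sum>F\<in>Fk. real (card B) * (real (card (Net F)) * (exp (- L) * 2 ^ card F)))"
    by simp
  also have "\<dots> \<le> (\<Sum>F\<in>Fk. real (card B) * ((3 / \<epsilon>) ^ card F * (exp (- L) * 2 ^ card F)))"
    by (intro sum_mono mult_left_mono mult_right_mono cN) auto
  also have "\<dots> = (\<Sum>F\<in>Fk. real (card B) * exp (- L) * (6 / \<epsilon>) ^ card F)"
    by (intro sum.cong refl) (simp add: power_mult_distrib[symmetric] mult_ac)
  also have "\<dots> \<le> (\<Sum>F\<in>Fk. real (card B) * exp (- L) * (6 / \<epsilon>) ^ k)"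
    by (intro sum_mono mult_left_mono power_increasing) (use assms in auto)
  also have "\<dots> = real (card B) * exp (- L) * (6 / \<epsilon>) ^ k * real (card Fk)"
    by simp
  also have "\<dots> \<le> real (card B) * exp (- L) * (6 / \<epsilon>) ^ k * (exp 1 * real CARD('N) / real k) ^ k"
    by (intro mult_left_mono cF) (use assms in auto)
  also have "\<dots> = real (card B) * (6 * exp 1 * real CARD('N) / (real k * \<epsilon>)) ^ k * exp (- L)"
    by (simp add: power_mult_distrib[symmetric] mult_ac)
  finally show ?thesis .
qed



theorem mainTheorem4:
  fixes M :: "'a measure"
    and X :: "'N::finite \<Rightarrow> 'a \<Rightarrow> real ^ 'n::finite"
    and \<psi> \<epsilon> \<alpha> \<beta> L :: real
    and k m :: nat
    and \<B> :: "(real ^ 'N) set"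
    and Net :: "'N set \<Rightarrow> (real ^ 'N) set"
  assumes "prob_space M"
    and "\<And>i. X i \<in> borel_measurable M"
    and "prob_space.indep_vars M (\<lambda>_. borel) X UNIV"
    and "\<psi> > 0"
    and "\<And>i y. norm y = 1 \<Longrightarrow> psi1_norm M (\<lambda>\<omega>. X i \<omega> \<bullet> y) \<le> ereal \<psi>"
    and "1 \<le> k" "k \<le> CARD('N)" "1 \<le> m" "m \<le> CARD('N)"
    and "0 < \<epsilon>" "\<epsilon> \<le> 1" "0 < \<alpha>" "\<alpha> \<le> 1" "\<beta> > 0" "L > 0"
    and "\<B> \<subseteq> B_sparse m \<beta>" "finite \<B>"
    and "is_net_family Net \<epsilon> \<alpha>"
  shows "measure M {\<omega> \<in> space M. \<exists>F x z. card F \<le> k \<and> x \<in> \<B> \<and> z \<in> Net F \<and>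
            (\<Sum>i\<in>F. \<bar>((z $ i) *\<^sub>R X i \<omega>) \<bullet> (\<Sum>j\<in>UNIV - F. (x $ j) *\<^sub>R X j \<omega>)\<bar>)
              > \<psi> * \<alpha> * \<beta> * L * A_sparse X m \<omega>}
         \<le> real (card \<B>) * (6 * exp 1 * real CARD('N) / (real k * \<epsilon>)) ^ k * exp (- L)"
proof -
  note P = assms(1) and Xm = assms(2) and ind = assms(3) and psi = assms(5)
  interpret prob_space M by fact
  define S0 where "S0 = {\<omega> \<in> space M. \<exists>F x z. card F \<le> k \<and> x \<in> \<B> \<and> z \<in> Net F \<and>
            (\<Sum>i\<in>F. \<bar>((z $ i) *\<^sub>R X i \<omega>) \<bullet> (\<Sum>j\<in>UNIV - F. (x $ j) *\<^sub>R X j \<omega>)\<bar>)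
              > \<psi> * \<alpha> * \<beta> * L * A_sparse X m \<omega>}"
  define Fk where "Fk = {F :: 'N set. card F \<le> k}"
  define c where "c = \<psi> * \<alpha>"
  have c0: "c > 0" using assms by (simp add: c_def)
  have netd: "Net F \<subseteq> net_domain F \<alpha>" and finN: "finite (Net F)"
    and cN: "real (card (Net F)) \<le> (3 / \<epsilon>) ^ card F" for F
    using assms(18) unfolding is_net_family_def by auto
  define T where "T \<omega> = (\<Sum>F\<in>Fk. \<Sum>x\<in>\<B>. \<Sum>z\<in>Net F. ennreal (exp (- L)) * ennreal (hf c F x z (\<lambda>i. X i \<omega>)))" for \<omega>
  have ind_le: "indicator S0 \<omega> \<le> T \<omega>" if \<omega>: "\<omega> \<in> space M" for \<omega>
  proof (cases "\<omega> \<in> S0")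
    case False then show ?thesis by simp
  next
    case True
    then obtain F x z where F: "card F \<le> k" and x: "x \<in> \<B>" and z: "z \<in> Net F" and
      ineq: "(\<Sum>i\<in>F. \<bar>((z $ i) *\<^sub>R X i \<omega>) \<bullet> (\<Sum>j\<in>UNIV - F. (x $ j) *\<^sub>R X j \<omega>)\<bar>)
              > \<psi> * \<alpha> * \<beta> * L * A_sparse X m \<omega>"
      unfolding S0_def by blast
    let ?Y = "Yf F x (\<lambda>i. X i \<omega>)"
    have Seq: "(\<Sum>i\<in>F. \<bar>((z $ i) *\<^sub>R X i \<omega>) \<bullet> (\<Sum>j\<in>UNIV - F. (x $ j) *\<^sub>R X j \<omega>)\<bar>)
        = Sf F x z (\<lambda>i. X i \<omega>)"
      unfolding Sf_def Yf_def by (simp add: abs_mult)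
    have "norm ?Y \<le> \<beta> * A_sparse X m \<omega>"
      using x assms(16) by (intro Y_le assms(8)) auto
    then have "c * L * norm ?Y \<le> c * L * (\<beta> * A_sparse X m \<omega>)"
      using c0 assms(15) by (intro mult_left_mono) auto
    then have gt: "Sf F x z (\<lambda>i. X i \<omega>) > c * L * norm ?Y"
      using ineq unfolding Seq c_def by (simp add: mult_ac)
    have Yne: "?Y \<noteq> 0"
    proof
      assume "?Y = 0"
      then have "Sf F x z (\<lambda>i. X i \<omega>) = 0" unfolding Sf_def by simp
      with gt \<open>?Y = 0\<close> show False by simp
    qed
    then have "L < Sf F x z (\<lambda>i. X i \<omega>) / (c * norm ?Y)"
      using gt c0 by (simp add: pos_less_divide_eq mult_ac)
    then have "exp L \<le> hf c F x z (\<lambda>i. X i \<omega>)" unfolding hf_def by simp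
    then have "1 \<le> exp (- L) * hf c F x z (\<lambda>i. X i \<omega>)"
      by (simp add: exp_minus field_simps)
    then have one: "1 \<le> ennreal (exp (- L)) * ennreal (hf c F x z (\<lambda>i. X i \<omega>))"
    proof -
      assume h: "1 \<le> exp (- L) * hf c F x z (\<lambda>i. X i \<omega>)"
      have "ennreal 1 \<le> ennreal (exp (- L) * hf c F x z (\<lambda>i. X i \<omega>))" by (rule ennreal_leI[OF h])
      then show ?thesis by (simp add: ennreal_mult hf_def)
    qed
    have "ennreal (exp (- L)) * ennreal (hf c F x z (\<lambda>i. X i \<omega>))
        \<le> (\<Sum>z\<in>Net F. ennreal (exp (- L)) * ennreal (hf c F x z (\<lambda>i. X i \<omega>)))"
      by (rule member_le_sum) (use z finN in auto)
    also have "\<dots> \<le> (\<Sum>x\<in>\<B>. \<Sum>z\<in>Net F. ennreal (exp (- L)) * ennreal (hf c F x z (\<lambda>i. X i \<omega>)))"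
      by (rule member_le_sum[where f="\<lambda>x. \<Sum>z\<in>Net F. ennreal (exp (- L)) * ennreal (hf c F x z (\<lambda>i. X i \<omega>))"]) (use x assms(17) in auto)
    also have "\<dots> \<le> T \<omega>" unfolding T_def
      by (rule member_le_sum[where f="\<lambda>F. \<Sum>x\<in>\<B>. \<Sum>z\<in>Net F. ennreal (exp (- L)) * ennreal (hf c F x z (\<lambda>i. X i \<omega>))"]) (use F in \<open>auto simp: Fk_def\<close>)
    finally show ?thesis using one True by simp
  qed
  have intT: "(\<integral>\<^sup>+ \<omega>. T \<omega> \<partial>M) \<le> ennreal (\<Sum>F\<in>Fk. \<Sum>x\<in>\<B>. \<Sum>z\<in>Net F. exp (- L) * 2 ^ card F)"
  proof -
    have "(\<integral>\<^sup>+ \<omega>. T \<omega> \<partial>M) = (\<Sum>F\<in>Fk. \<Sum>x\<in>\<B>. \<Sum>z\<in>Net F. ennreal (exp (- L)) * (\<integral>\<^sup>+ \<omega>. ennreal (hf c F x z (\<lambda>i. X i \<omega>)) \<partial>M))"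
    proof -
      have hm[measurable]: "(\<lambda>\<omega>. ennreal (hf c F x z (\<lambda>i. X i \<omega>))) \<in> borel_measurable M" for F x z
        by (rule hf_comp_meas[OF Xm])
      have hm'[measurable]: "(\<lambda>\<omega>. hf c F x z (\<lambda>i. X i \<omega>)) \<in> borel_measurable M" for F x z
        unfolding hf_def Sf_def Yf_def using Xm by measurable
      show ?thesis unfolding T_def
        apply (subst nn_integral_sum, measurable)
        apply (intro sum.cong refl)
        apply (subst nn_integral_sum, measurable)
        apply (intro sum.cong refl)
        apply (subst nn_integral_sum, measurable)
        apply (intro sum.cong refl)
        apply (rule nn_integral_cmult, measurable)
        done
    qed
    also have "\<dots> \<le> (\<Sum>F\<in>Fk. \<Sum>x\<in>\<B>. \<Sum>z\<in>Net F. ennreal (exp (- L)) * 2 ^ card F)"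
    proof (intro sum_mono mult_left_mono)
      fix F x z assume "z \<in> Net F"
      then have za: "\<bar>z $ i\<bar> \<le> \<alpha>" for i using netd[of F] unfolding net_domain_def by auto
      show "(\<integral>\<^sup>+ \<omega>. ennreal (hf c F x z (\<lambda>i. X i \<omega>)) \<partial>M) \<le> 2 ^ card F"
        unfolding c_def by (rule core_bound[OF P Xm ind assms(4) psi assms(12) za])
    qed simp
    also have "\<dots> = ennreal (\<Sum>F\<in>Fk. \<Sum>x\<in>\<B>. \<Sum>z\<in>Net F. exp (- L) * 2 ^ card F)"
    proof -
      have eqt: "ennreal (exp (- L)) * 2 ^ card F = ennreal (exp (- L) * 2 ^ card F)" for F :: "'N set"
        by (simp add: ennreal_mult ennreal_power[symmetric])
      show ?thesis by (simp add: eqt sum_ennreal sum_nonneg del: sum_constant)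
    qed
    finally show ?thesis .
  qed
  have cF: "real (card Fk) \<le> (exp 1 * real CARD('N) / real k) ^ k"
    unfolding Fk_def card_small_sets
    using sum_choose_bound[OF assms(6,7)] by simp
  have R: "(\<Sum>F\<in>Fk. \<Sum>x\<in>\<B>. \<Sum>z\<in>Net F. exp (- L) * 2 ^ card F)
     \<le> real (card \<B>) * (6 * exp 1 * real CARD('N) / (real k * \<epsilon>)) ^ k * exp (- L)"
    by (rule real_part[OF Fk_def cN assms(10,11) cF])
  have Rnn: "0 \<le> (\<Sum>F\<in>Fk. \<Sum>x\<in>\<B>. \<Sum>z\<in>Net F. exp (- L) * 2 ^ card F)"
    by (intro sum_nonneg) auto
  have "measure M S0 \<le> (\<Sum>F\<in>Fk. \<Sum>x\<in>\<B>. \<Sum>z\<in>Net F. exp (- L) * 2 ^ card F)"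
  proof (cases "S0 \<in> sets M")
    case True
    have "ennreal (measure M S0) = emeasure M S0" by (simp add: emeasure_eq_measure)
    also have "\<dots> = (\<integral>\<^sup>+ \<omega>. indicator S0 \<omega> \<partial>M)" using True by simp
    also have "\<dots> \<le> (\<integral>\<^sup>+ \<omega>. T \<omega> \<partial>M)" by (intro nn_integral_mono ind_le)
    also have "\<dots> \<le> ennreal (\<Sum>F\<in>Fk. \<Sum>x\<in>\<B>. \<Sum>z\<in>Net F. exp (- L) * 2 ^ card F)" by (rule intT)
    finally show ?thesis using Rnn by (simp add: ennreal_le_iff)
  next
    case False
    then show ?thesis using Rnn by (simp add: measure_notin_sets)
  qed
  with R show ?thesis unfolding S0_def by linarith
qed

end
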